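(* Assume $\mathscr{R}_0>\frac{\sigma_m(\mu+r)C_I}{\mu\beta}$ (equivalently $C_I<\frac{\beta A}{(\mu+r)(\mu+\beta+\rho)}$) and $$C_I\le\frac{\mu^2}{\mu+r}\left(\sqrt{\frac{\beta}{\mu\sigma_m}+\frac{1}{\sigma_s}}-\sqrt{\frac{1}{\sigma_s}}\right)^2.$$ Then, with $K=1+\frac{\sigma_m(\mu+r)}{\mu\beta}C_I$: if $(\sqrt p+\sqrt q)^2\le\mathscr{R}_0\le1$, $E^*$ is not an endemic equilibrium but $E_1^*$ and $E_2^*$ are; if $1<\mathscr{R}_0<K$, all of $E^*,E_1^*,E_2^*$ are endemic equilibria; if $\mathscr{R}_0=K$, $E^*$ and $E_1^*$ are endemic equilibria but $E_2^*$ is not; if $\mathscr{R}_0>K$, $E_1^*$ is the unique endemic equilibrium.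
   Context: Let $A,\sigma_m,\sigma_s,\mu,\rho,\beta,r,C_I$ be positive constants. Write $[x]^+=\max\{0,x\}$ and $T(I_s)=rI_s$ if $I_s<C_I$, $T(I_s)=rC_I$ if $I_s\ge C_I$. System (3) is $$S'=A-\sigma_mSI_m-\sigma_sS[I_s-C_I]^+-\mu S,\quad I_m'=\sigma_mSI_m+\sigma_sS[I_s-C_I]^+-(\mu+\rho+\beta)I_m,\quad I_s'=\beta I_m-T(I_s)-\mu I_s.$$ $\mathscr{R}_0=\frac{A\sigma_m}{\mu(\mu+\beta+\rho)}$. An endemic equilibrium is an equilibrium of (3) with $S,I_m,I_s>0$. $E^*=(S^*,I_m^*,I_s^* )$ with $S^*=\frac{\mu+\beta+\rho}{\sigma_m}$, $I_m^*=\frac{\mu(\mathscr{R}_0-1)}{\sigma_m}$, $I_s^*=\frac{\mu\beta(\mathscr{R}_0-1)}{\sigma_m(\mu+r)}$. Let $p=\frac{(\mu+r)\sigma_m\sigma_sC_I}{\mu(\mu\sigma_m+\beta\sigma_s)}$, $q=\frac{\mu\sigma_m}{\mu\sigma_m+\beta\sigma_s}$, and $S_{1,2}^*=\frac{\mu+\beta+\rho}{2\sigma_m}\big\{\mathscr{R}_0-p+q\mp\sqrt{(\mathscr{R}_0-p-q)^2-4pq}\big\}$ (minus sign for $S_1^*$, plus for $S_2^*$), $I_{m_i}^*=\frac{\mu\mathscr{R}_0}{\sigma_m}-\frac{\mu S_i^*}{\mu+\beta+\rho}$, $I_{s_i}^*=\frac{\beta\mathscr{R}_0}{\sigma_m}-\frac{\beta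 S_i^*}{\mu+\beta+\rho}-\frac{rC_I}{\mu}$, $E_i^*=(S_i^*,I_{m_i}^*,I_{s_i}^* )$, $i=1,2$. "$E_i^*$ exists" / "$E_i^*$ is an endemic equilibrium" means $S_i^*$ is real, $S_i^*>0$, $I_{m_i}^*>0$ and $I_{s_i}^*>C_I$; "$E^*$ exists" means $E^*$ is an endemic equilibrium. *)

theory Defs
  imports Complex_Main
begin

text \<open>Parameters are always passed in the order A sm ss mu rho beta r CI
 (for A, sigma_m, sigma_s, mu, rho, beta, r, C_I).\<close>

definition pos_part :: "real \<Rightarrow> real" where
  "pos_part x = max 0 x"

definition Tfun :: "real \<Rightarrow> real \<Rightarrow> real \<Rightarrow> real" where
  "Tfun r CI Ys = (if Ys < CI then r * Ys else r * CI)"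

definition rhsS :: "real \<Rightarrow> real \<Rightarrow> real \<Rightarrow> real \<Rightarrow> real \<Rightarrow> real \<Rightarrow> real \<Rightarrow> real \<Rightarrow> real \<times> real \<times> real \<Rightarrow> real" where
  "rhsS A sm ss mu rho beta r CI E = (case E of (S, Ym, Ys) \<Rightarrow>
     A - sm * S * Ym - ss * S * pos_part (Ys - CI) - mu * S)"

definition rhsIm :: "real \<Rightarrow> real \<Rightarrow> real \<Rightarrow> real \<Rightarrow> real \<Rightarrow> real \<Rightarrow> real \<Rightarrow> real \<Rightarrow> real \<times> real \<times> real \<Rightarrow> real" where
  "rhsIm A sm ss mu rho beta r CI E = (case E of (S, Ym, Ys) \<Rightarrow>
     sm * S * Ym + ss * S * pos_part (Ys - CI) - (mu + rho + beta) * Ym)"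

definition rhsIs :: "real \<Rightarrow> real \<Rightarrow> real \<Rightarrow> real \<Rightarrow> real \<Rightarrow> real \<Rightarrow> real \<Rightarrow> real \<Rightarrow> real \<times> real \<times> real \<Rightarrow> real" where
  "rhsIs A sm ss mu rho beta r CI E = (case E of (S, Ym, Ys) \<Rightarrow>
     beta * Ym - Tfun r CI Ys - mu * Ys)"

definition endemic_eq :: "real \<Rightarrow> real \<Rightarrow> real \<Rightarrow> real \<Rightarrow> real \<Rightarrow> real \<Rightarrow> real \<Rightarrow> real \<Rightarrow> real \<times> real \<times> real \<Rightarrow> bool" where
  "endemic_eq A sm ss mu rho beta r CI E = (case E of (S, Ym, Ys) \<Rightarrow>
     S > 0 \<and> Ym > 0 \<and> Ys > 0 \<and>
     rhsS A sm ss mu rho beta r CI E = 0 \<and>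
     rhsIm A sm ss mu rho beta r CI E = 0 \<and>
     rhsIs A sm ss mu rho beta r CI E = 0)"

definition R0 :: "real \<Rightarrow> real \<Rightarrow> real \<Rightarrow> real \<Rightarrow> real \<Rightarrow> real \<Rightarrow> real" where
  "R0 A sm mu rho beta r = A * sm / (mu * (mu + beta + rho))"

definition Estar :: "real \<Rightarrow> real \<Rightarrow> real \<Rightarrow> real \<Rightarrow> real \<Rightarrow> real \<Rightarrow> real \<Rightarrow> real \<Rightarrow> real \<times> real \<times> real" where
  "Estar A sm ss mu rho beta r CI =
     (let R = R0 A sm mu rho beta r in
      ((mu + beta + rho) / sm,
       mu * (R - 1) / sm,
       mu * beta * (R - 1) / (sm * (mu + r))))"

definition pp :: "real \<Rightarrow> real \<Rightarrow> real \<Rightarrow> real \<Rightarrow> real \<Rightarrow> real \<Rightarrow> real \<Rightarrow> real \<Rightarrow> real" where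
  "pp A sm ss mu rho beta r CI = (mu + r) * sm * ss * CI / (mu * (mu * sm + beta * ss))"

definition qq :: "real \<Rightarrow> real \<Rightarrow> real \<Rightarrow> real \<Rightarrow> real \<Rightarrow> real \<Rightarrow> real \<Rightarrow> real \<Rightarrow> real" where
  "qq A sm ss mu rho beta r CI = mu * sm / (mu * sm + beta * ss)"

definition discr :: "real \<Rightarrow> real \<Rightarrow> real \<Rightarrow> real \<Rightarrow> real \<Rightarrow> real \<Rightarrow> real \<Rightarrow> real \<Rightarrow> real" where
  "discr A sm ss mu rho beta r CI =
     (let R = R0 A sm mu rho beta r; p = pp A sm ss mu rho beta r CI;
          q = qq A sm ss mu rho beta r CI in (R - p - q)^2 - 4 * p * q)"

text \<open>S_i^* with sign s = -1 for i = 1 and s = 1 for i = 2.\<close>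
definition Si :: "real \<Rightarrow> real \<Rightarrow> real \<Rightarrow> real \<Rightarrow> real \<Rightarrow> real \<Rightarrow> real \<Rightarrow> real \<Rightarrow> real \<Rightarrow> real" where
  "Si s A sm ss mu rho beta r CI =
     (let R = R0 A sm mu rho beta r; p = pp A sm ss mu rho beta r CI;
          q = qq A sm ss mu rho beta r CI in
      (mu + beta + rho) / (2 * sm) * (R - p + q + s * sqrt (discr A sm ss mu rho beta r CI)))"

definition Ei :: "real \<Rightarrow> real \<Rightarrow> real \<Rightarrow> real \<Rightarrow> real \<Rightarrow> real \<Rightarrow> real \<Rightarrow> real \<Rightarrow> real \<Rightarrow> real \<times> real \<times> real" where
  "Ei s A sm ss mu rho beta r CI =
     (let R = R0 A sm mu rho beta r; S = Si s A sm ss mu rho beta r CI in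
      (S, mu * R / sm - mu * S / (mu + beta + rho),
          beta * R / sm - beta * S / (mu + beta + rho) - r * CI / mu))"

definition Ei_exists :: "real \<Rightarrow> real \<Rightarrow> real \<Rightarrow> real \<Rightarrow> real \<Rightarrow> real \<Rightarrow> real \<Rightarrow> real \<Rightarrow> real \<Rightarrow> bool" where
  "Ei_exists s A sm ss mu rho beta r CI =
     (discr A sm ss mu rho beta r CI \<ge> 0 \<and>
      (case Ei s A sm ss mu rho beta r CI of (S, Ym, Ys) \<Rightarrow> S > 0 \<and> Ym > 0 \<and> Ys > CI))"

end

theory Submission
  imports Defs
begin


lemma kq_lt:
  fixes p q k :: real
  assumes q0: "0<q" "q<1" and k0: "0<k" and pk: "p = k*(1-q)" and hs: "sqrt p + sqrt q \<le> 1"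
  shows "k*q < 1-q"
proof -
  have p0: "p \<ge> 0" using pk q0 k0 by simp
  have sq1: "sqrt q < 1" using q0 by simp
  have sqsq: "sqrt q * sqrt q = q" using q0 by simp
  have "q = sqrt q * sqrt q" using sqsq by simp
  also have "\<dots> \<le> sqrt q * 1" using sq1 q0 by (intro mult_left_mono) auto
  finally have sqq: "q \<le> sqrt q" by simp
  have a: "sqrt p \<le> 1 - sqrt q" using hs by simp
  have "p = sqrt p ^ 2" using p0 by simp
  also have "\<dots> \<le> (1 - sqrt q)^2" using a p0 by (intro power_mono) auto
  finally have "p \<le> (1 - sqrt q)^2" .
  then have "p*q \<le> (1 - sqrt q)^2 * q" using q0 by (simp add: mult_right_mono)
  also have "\<dots> = (sqrt q - q)^2"
    using sqsq by (simp add: power2_eq_square algebra_simps)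
  also have "\<dots> < (1-q)^2"
    using sqq sq1 by (intro power_strict_mono) auto
  finally have "k*q*(1-q) < (1-q)*(1-q)" using pk by (simp add: power2_eq_square algebra_simps)
  then show ?thesis using q0 by simp
qed

lemma disc_eq: fixes R p q :: real shows "(R-p-q)^2 - 4*p*q = (R-p+q)^2 - 4*R*q"
  by (simp add: power2_eq_square algebra_simps)

lemma f_at: fixes R p q k :: real assumes "p = k*(1-q)"
  shows "(2*(R-k) - (R-p+q))^2 - ((R-p+q)^2 - 4*R*q) = 4*k*q*(1+k-R)"
  unfolding assms by (simp add: power2_eq_square algebra_simps)

lemma case_a:
  fixes R p q k :: real
  assumes q0: "0<q" "q<1" and k0: "0<k" and pk: "p = k*(1-q)" and hs: "sqrt p + sqrt q \<le> 1"
    and hR: "(sqrt p + sqrt q)^2 \<le> R" and hRK: "R < 1+k"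
  defines "d \<equiv> (R-p-q)^2 - 4*p*q"
  shows "d \<ge> 0 \<and> 0 < (R-p+q - sqrt d)/2 \<and> (R-p+q + sqrt d)/2 < R-k"
proof -
  have p0: "p > 0" using pk q0 k0 by simp
  have kq: "k*q < 1-q" using kq_lt[OF q0 k0 pk hs] .
  have sp: "sqrt p * sqrt p = p" "sqrt q * sqrt q = q" using p0 q0 by auto
  have spq: "sqrt (p*q) = sqrt p * sqrt q" by (simp add: real_sqrt_mult)
  have e1: "(sqrt p + sqrt q)^2 = p + q + 2*sqrt(p*q)"
    using sp spq by (simp add: power2_eq_square algebra_simps)
  have h1: "R - p - q \<ge> 2*sqrt(p*q)" using hR e1 by simp
  have pq0: "p*q \<ge> 0" using p0 q0 by simp
  have sq0: "sqrt(p*q) \<ge> 0" using pq0 by simp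
  have "(2*sqrt(p*q))^2 \<le> (R-p-q)^2" using h1 sq0 by (intro power_mono) auto
  moreover have "p*q \<ge> 0" using p0 q0 by simp
  ultimately have "4*p*q \<le> (R-p-q)^2" by (simp add: power2_eq_square)
  then have d0: "d \<ge> 0" unfolding d_def by simp
  define t where "t = sqrt d"
  have t0: "t \<ge> 0" and tt: "t^2 = d" using d0 unfolding t_def by auto
  define sg where "sg = R-p+q"
  have dsg: "d = sg^2 - 4*R*q" unfolding d_def sg_def using disc_eq by simp
  have Rpos: "R > 0" using h1 sq0 p0 q0 by linarith
  have sg0: "sg > 0" using h1 sq0 q0 unfolding sg_def by linarith
  have "t^2 < sg^2" using tt dsg Rpos q0 by simp
  then have x1: "t < sg" using sg0 t0 by (meson power_less_imp_less_base less_imp_le)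
  have pq: "p*q > (k*q)^2"
  proof -
    have "(k*q)^2 = k*q*(k*q)" by (simp add: power2_eq_square)
    also have "\<dots> < k*q*(1-q)" using kq k0 q0 by simp
    finally show ?thesis unfolding pk by (simp add: algebra_simps)
  qed
  have "sqrt ((k*q)^2) < sqrt(p*q)" using pq by (simp only: real_sqrt_less_iff)
  then have skq: "k*q < sqrt (p*q)" using k0 q0 by simp
  define m where "m = 2*(R-k) - sg"
  have m0: "m > 0" unfolding m_def sg_def using h1 skq pk by (simp add: algebra_simps)
  have "m^2 - t^2 = 4*k*q*(1+k-R)" using f_at[OF pk, of R] tt dsg unfolding m_def sg_def by simp
  also have "\<dots> > 0" using k0 q0 hRK by simp
  finally have "t^2 < m^2" by simp
  then have "t < m" using m0 t0 by (meson power_less_imp_less_base less_imp_le)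
  then show ?thesis using d0 x1 unfolding t_def[symmetric] sg_def[symmetric] m_def by simp
qed

lemma case_b:
  fixes R p q k :: real
  assumes q0: "0<q" "q<1" and k0: "0<k" and pk: "p = k*(1-q)" and hs: "sqrt p + sqrt q \<le> 1"
    and hRK: "R = 1+k"
  defines "d \<equiv> (R-p-q)^2 - 4*p*q"
  shows "d \<ge> 0 \<and> (R-p+q - sqrt d)/2 = (1+k)*q \<and> (R-p+q + sqrt d)/2 = 1"
proof -
  have kq: "k*q < 1-q" using kq_lt[OF q0 k0 pk hs] .
  have sg: "R-p+q = 1 + (1+k)*q" unfolding hRK pk by (simp add: algebra_simps)
  have "d = (1 - (1+k)*q)^2" unfolding d_def pk hRK by (simp add: power2_eq_square algebra_simps)
  moreover have "1 - (1+k)*q > 0" using kq by (simp add: algebra_simps)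
  ultimately have "sqrt d = 1 - (1+k)*q" by simp
  then show ?thesis using sg \<open>d = _\<close> by simp
qed

lemma case_c:
  fixes R p q k :: real
  assumes q0: "0<q" "q<1" and k0: "0<k" and pk: "p = k*(1-q)"
    and hRK: "R > 1+k"
  defines "d \<equiv> (R-p-q)^2 - 4*p*q"
  shows "d \<ge> 0 \<and> 0 < (R-p+q - sqrt d)/2 \<and> (R-p+q - sqrt d)/2 < R-k \<and>
    (\<forall>x. x^2 - (R-p+q)*x + R*q = 0 \<longrightarrow> x < R-k \<longrightarrow> x = (R-p+q - sqrt d)/2)"
proof -
  define sg where "sg = R-p+q"
  have dsg: "d = sg^2 - 4*R*q" unfolding d_def sg_def using disc_eq by simp
  define m where "m = 2*(R-k) - sg"
  have "m^2 - (sg^2 - 4*R*q) = 4*k*q*(1+k-R)" using f_at[OF pk, of R] unfolding m_def sg_def by simp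
  also have "\<dots> < 0" using k0 q0 hRK by (simp add: mult_pos_neg)
  finally have md: "m^2 < d" using dsg by simp
  have d0: "d \<ge> 0" using md by (smt (verit) zero_le_power2)
  define t where "t = sqrt d"
  have t0: "t \<ge> 0" and tt: "t^2 = d" using d0 unfolding t_def by auto
  have "\<bar>m\<bar>^2 < t^2" using md tt by simp
  then have mt: "\<bar>m\<bar> < t" using t0 by (meson power_less_imp_less_base less_imp_le)
  have Rpos: "R > 0" using hRK k0 by simp
  have sg0: "sg > 0" unfolding sg_def pk using hRK q0 k0
    by (smt (verit) mult_less_cancel_left1 mult_pos_pos)
  have "t^2 < sg^2" using tt dsg Rpos q0 by simp
  then have x1: "t < sg" using sg0 t0 by (meson power_less_imp_less_base less_imp_le)
  have u: "x = (sg - t)/2" if "x^2 - sg*x + R*q = 0" "x < R-k" for x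
  proof -
    have "(2*x - sg)^2 = t^2" using that(1) tt dsg by (simp add: power2_eq_square algebra_simps)
    then have A: "2*x - sg = t \<or> 2*x - sg = -t" by (simp add: power2_eq_iff)
    have "m \<le> \<bar>m\<bar>" by simp
    then have "m < t" using mt by linarith
    then have "2*x - sg < t" using that(2) unfolding m_def by (smt (verit))
    then show ?thesis using A by auto
  qed
  show ?thesis using d0 x1 mt u unfolding t_def[symmetric] sg_def[symmetric] m_def by auto
qed



lemma hs_lemma:
  fixes sm ss mu beta r CI :: real
  assumes pos: "sm > 0" "ss > 0" "mu > 0" "beta > 0" "r > 0" "CI > 0"
    and hC: "CI \<le> mu^2 / (mu + r) * (sqrt (beta / (mu * sm) + 1 / ss) - sqrt (1 / ss))^2"
  defines "D \<equiv> mu*sm+beta*ss"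
  shows "sqrt ((mu + r) * sm * ss * CI / (mu * D)) + sqrt (mu*sm/D) \<le> 1"
proof -
  define a where "a = beta / (mu * sm) + 1 / ss"
  define b where "b = 1/ss"
  define c where "c = sqrt (mu*sm*ss/D)"
  have D0: "D > 0" unfolding D_def using pos by (simp add: add_pos_pos)
  have c0: "c \<ge> 0" unfolding c_def using pos D0 by simp
  have "mu*sm*ss * a = D" unfolding a_def D_def using pos by (simp add: field_simps)
  then have "mu*sm*ss/D * a = 1" using D0 by (simp add: field_simps)
  then have ca: "c * sqrt a = 1" unfolding c_def by (metis real_sqrt_mult real_sqrt_one)
  have "mu*sm*ss/D * b = mu*sm/D" unfolding b_def using pos by (simp add: field_simps)
  then have cb: "c * sqrt b = sqrt (mu*sm/D)" unfolding c_def by (metis real_sqrt_mult)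
  have q1: "sqrt (mu*sm/D) < 1"
  proof -
    have "mu*sm/D < 1" using pos D0 unfolding D_def by (simp add: field_simps)
    then show ?thesis by simp
  qed
  have "(mu + r) * sm * ss * CI / (mu * D) = (mu + r) * sm * ss / (mu * D) * CI" by simp
  also have "\<dots> \<le> (mu + r) * sm * ss / (mu * D) * (mu^2 / (mu + r) * (sqrt a - sqrt b)^2)"
    using hC pos D0 unfolding a_def b_def by (intro mult_left_mono) auto
  also have "\<dots> = c^2 * (sqrt a - sqrt b)^2"
  proof -
    have c2: "c^2 = mu*sm*ss/D" unfolding c_def using pos D0 by simp
    have "\<And>w. (mu + r) * sm * ss / (mu * D) * (mu^2 / (mu + r) * w) = mu*sm*ss/D * w"
    proof -
      fix w
      have "mu + r \<noteq> 0" "mu \<noteq> 0" "D \<noteq> 0" using pos D0 by auto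
      then show "(mu + r) * sm * ss / (mu * D) * (mu^2 / (mu + r) * w) = mu*sm*ss/D * w"
        by (simp add: divide_simps power2_eq_square)
    qed
    then show ?thesis using c2 by simp
  qed
  also have "\<dots> = (c * sqrt a - c * sqrt b)^2"
  proof -
    have "\<And>u v. c^2*(u-v)^2 = (c*u - c*v)^2" by (simp add: power2_eq_square algebra_simps)
    then show ?thesis by blast
  qed
  also have "\<dots> = (1 - sqrt (mu*sm/D))^2" using ca cb by simp
  finally have "sqrt ((mu + r) * sm * ss * CI / (mu * D)) \<le> sqrt ((1 - sqrt (mu*sm/D))^2)"
    by (simp only: real_sqrt_le_iff)
  also have "\<dots> = 1 - sqrt (mu*sm/D)" using q1 by simp
  finally show ?thesis by simp
qed

lemma Ei_exists_iff:
  fixes A sm ss mu rho beta r CI s :: real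
  assumes pos: "sm > 0" "mu > 0" "rho > 0" "beta > 0" "r > 0" "CI > 0"
  defines "R \<equiv> R0 A sm mu rho beta r"
    and "k \<equiv> sm * (mu + r) * CI / (mu * beta)"
    and "X \<equiv> (R0 A sm mu rho beta r - pp A sm ss mu rho beta r CI + qq A sm ss mu rho beta r CI + s * sqrt (discr A sm ss mu rho beta r CI))/2"
  shows "Ei_exists s A sm ss mu rho beta r CI \<longleftrightarrow>
     discr A sm ss mu rho beta r CI \<ge> 0 \<and> 0 < X \<and> X < R - k"
proof -
  define N where "N = mu+beta+rho"
  have N0: "N > 0" unfolding N_def using pos by simp
  define S where "S = Si s A sm ss mu rho beta r CI"
  have SX: "S = N/sm * X" unfolding S_def Si_def X_def R_def N_def Let_def by simp
  have Ei: "Ei s A sm ss mu rho beta r CI = (S, mu*R/sm - mu*S/N, beta*R/sm - beta*S/N - r*CI/mu)"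
    unfolding Ei_def S_def R_def N_def Let_def by simp
  have h1: "S > 0 \<longleftrightarrow> X > 0" unfolding SX using N0 pos by (simp add: zero_less_mult_iff zero_less_divide_iff)
  have h2: "mu*R/sm - mu*S/N = mu/sm*(R-X)" unfolding SX using N0 pos by (simp add: field_simps)
  have h3: "beta*R/sm - beta*S/N - r*CI/mu - CI = beta/sm*(R - X - k)"
    unfolding SX k_def using N0 pos by (simp add: field_simps)
  have h3': "beta*R/sm - beta*S/N - r*CI/mu > CI \<longleftrightarrow> R - X > k"
  proof -
    have "beta*R/sm - beta*S/N - r*CI/mu > CI \<longleftrightarrow> beta/sm*(R - X - k) > 0" using h3 by linarith
    also have "\<dots> \<longleftrightarrow> R - X - k > 0" using pos by (simp add: zero_less_mult_iff zero_less_divide_iff)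
    finally show ?thesis by linarith
  qed
  have k0: "k > 0" unfolding k_def using pos by simp
  have h2': "mu*R/sm - mu*S/N > 0 \<longleftrightarrow> R - X > 0" unfolding h2 using pos by (simp add: zero_less_mult_iff zero_less_divide_iff)
  show ?thesis unfolding Ei_exists_def Ei using h1 h2' h3' k0 by auto
qed

lemma endemic_unfold:
  "endemic_eq A sm ss mu rho beta r CI (S,Y,Z) \<longleftrightarrow> S>0 \<and> Y>0 \<and> Z>0 \<and>
     A - sm*S*Y - ss*S*pos_part(Z-CI) - mu*S = 0 \<and>
     sm*S*Y + ss*S*pos_part(Z-CI) - (mu+rho+beta)*Y = 0 \<and>
     beta*Y - Tfun r CI Z - mu*Z = 0"
  by (simp add: endemic_eq_def rhsS_def rhsIm_def rhsIs_def)

lemma Estar_lemma: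
  fixes A sm ss mu rho beta r CI :: real
  assumes pos: "A > 0" "sm > 0" "ss > 0" "mu > 0" "rho > 0" "beta > 0" "r > 0" "CI > 0"
  defines "R \<equiv> R0 A sm mu rho beta r"
    and "k \<equiv> sm * (mu + r) * CI / (mu * beta)"
  shows "R \<le> 1 \<Longrightarrow> \<not> endemic_eq A sm ss mu rho beta r CI (Estar A sm ss mu rho beta r CI)"
    and "1 < R \<Longrightarrow> R \<le> 1 + k \<Longrightarrow> endemic_eq A sm ss mu rho beta r CI (Estar A sm ss mu rho beta r CI)"
proof -
  define N where "N = mu+beta+rho"
  have N0: "N > 0" unfolding N_def using pos by simp
  have ES: "Estar A sm ss mu rho beta r CI = (N/sm, mu*(R-1)/sm, mu*beta*(R-1)/(sm*(mu+r)))"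
    unfolding Estar_def R_def N_def Let_def by simp
  have RN: "R = A*sm/(mu*N)" unfolding R_def R0_def N_def by simp
  have AR: "A = R*mu*N/sm" unfolding RN using pos N0 by (simp add: field_simps)
  {
    assume "R \<le> 1"
    then have "mu*(R-1)/sm \<le> 0" using pos by (simp add: divide_nonpos_pos mult_nonneg_nonpos)
    then show "\<not> endemic_eq A sm ss mu rho beta r CI (Estar A sm ss mu rho beta r CI)"
      unfolding endemic_eq_def ES by auto
  next
    assume R1: "1 < R" and RK: "R \<le> 1 + k"
    define Z where "Z = mu*beta*(R-1)/(sm*(mu+r))"
    have mr: "mu + r \<noteq> 0" using pos by simp
    have "Z - CI = mu*beta/(sm*(mu+r))*(R-1-k)" unfolding Z_def k_def using pos mr
      by (simp add: divide_simps)
    moreover have "mu*beta/(sm*(mu+r))*(R-1-k) \<le> 0" using pos RK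
      by (intro mult_nonneg_nonpos) auto
    ultimately have ZC: "Z \<le> CI" by simp
    have pp0: "pos_part (Z - CI) = 0" unfolding pos_part_def using ZC by simp
    have T: "Tfun r CI Z = r*Z" unfolding Tfun_def using ZC by auto
    have "N/sm > 0" "mu*(R-1)/sm > 0" "Z > 0" using N0 pos R1 unfolding Z_def by auto
    moreover have "A - sm * (N/sm) * (mu*(R-1)/sm) - ss * (N/sm) * 0 - mu*(N/sm) = 0"
      unfolding AR using pos by (simp add: field_simps)
    moreover have "sm * (N/sm) * (mu*(R-1)/sm) + ss * (N/sm) * 0 - (mu+rho+beta) * (mu*(R-1)/sm) = 0"
      using pos by (simp add: N_def field_simps)
    moreover have "beta * (mu*(R-1)/sm) - r*Z - mu*Z = 0"
      unfolding Z_def using pos by (simp add: divide_simps) (simp add: algebra_simps)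
    ultimately show "endemic_eq A sm ss mu rho beta r CI (Estar A sm ss mu rho beta r CI)"
      unfolding ES Z_def[symmetric] endemic_unfold pp0 T by simp
  }
qed

lemma unique_lemma:
  fixes A sm ss mu rho beta r CI :: real and E :: "real \<times> real \<times> real"
  assumes pos: "A > 0" "sm > 0" "ss > 0" "mu > 0" "rho > 0" "beta > 0" "r > 0" "CI > 0"
  defines "R \<equiv> R0 A sm mu rho beta r"
    and "k \<equiv> sm * (mu + r) * CI / (mu * beta)"
    and "p \<equiv> pp A sm ss mu rho beta r CI"
    and "q \<equiv> qq A sm ss mu rho beta r CI"
    and "N \<equiv> mu + beta + rho"
  assumes RK: "R > 1 + k" and EE: "endemic_eq A sm ss mu rho beta r CI E"
  shows "\<exists>x. 0 < x \<and> x < R - k \<and> x^2 - (R-p+q)*x + R*q = 0 \<and>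
     E = (N*x/sm, mu*R/sm - mu*(N*x/sm)/N, beta*R/sm - beta*(N*x/sm)/N - r*CI/mu)"
proof -
  obtain S Y Z where E: "E = (S,Y,Z)" by (cases E) auto
  have N0: "N > 0" unfolding N_def using pos by simp
  have NN: "mu+rho+beta = N" unfolding N_def by simp
  have RN: "R = A*sm/(mu*N)" unfolding R_def R0_def N_def by simp
  have AR: "A = R*mu*N/sm" unfolding RN using pos N0 by (simp add: field_simps)
  have mr: "mu + r > 0" using pos by simp
  from EE[unfolded E endemic_unfold NN] have
    S0: "S > 0" and Y0: "Y > 0" and Z0: "Z > 0" and
    e1: "A - sm*S*Y - ss*S*pos_part(Z-CI) - mu*S = 0" and
    e2: "sm*S*Y + ss*S*pos_part(Z-CI) - N*Y = 0" and
    e3: "beta*Y - Tfun r CI Z - mu*Z = 0" by auto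
  show ?thesis
  proof (cases "Z \<le> CI")
    case True
    have pp0: "pos_part (Z - CI) = 0" unfolding pos_part_def using True by simp
    have T: "Tfun r CI Z = r*Z" unfolding Tfun_def using True by auto
    have "Y*(sm*S - N) = 0" using e2 unfolding pp0 by (simp add: algebra_simps)
    then have SN: "S = N/sm" using Y0 pos by (simp add: field_simps)
    have "A - N*Y - mu*N/sm = 0" using e1 unfolding pp0 SN using pos by (simp add: field_simps)
    then have "Y = A/N - mu/sm" using N0 pos by (simp add: field_simps)
    moreover have "A/N = R*mu/sm" unfolding RN using N0 pos by (simp add: field_simps)
    ultimately have "Y = R*mu/sm - mu/sm" by simp
    then have YR: "Y = mu*(R-1)/sm" by (simp add: diff_divide_distrib algebra_simps)
    have "beta*Y = (mu+r)*Z" using e3 unfolding T by (simp add: algebra_simps)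
    also have "\<dots> \<le> (mu+r)*CI" using True mr by simp
    finally have "beta*(mu*(R-1)/sm) \<le> (mu+r)*CI" unfolding YR .
    then have "R - 1 \<le> k" unfolding k_def using pos by (simp add: field_simps)
    then show ?thesis using RK by simp
  next
    case False
    then have ZC: "Z > CI" by simp
    have pp0: "pos_part (Z - CI) = Z - CI" unfolding pos_part_def using ZC by simp
    have T: "Tfun r CI Z = r*CI" unfolding Tfun_def using ZC by auto
    define x where "x = sm*S/N"
    have Sx: "S = N*x/sm" unfolding x_def using N0 pos by simp
    have "A - mu*S - N*Y = 0" using e1 e2 by simp
    then have "Y = A/N - mu*S/N" using N0 by (simp add: field_simps)
    moreover have "A/N = R*mu/sm" unfolding RN using N0 pos by (simp add: field_simps)
    moreover have "mu*S/N = mu*x/sm" unfolding Sx using N0 pos by (simp add: field_simps)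
    ultimately have "Y = R*mu/sm - mu*x/sm" by simp
    then have Yx: "Y = mu*(R-x)/sm" by (simp add: diff_divide_distrib algebra_simps)
    have Zx: "Z = (beta*Y - r*CI)/mu" using e3 unfolding T using pos by (simp add: field_simps)
    have ZCx: "Z - CI = beta/sm*(R-x-k)" unfolding Zx Yx k_def using pos mr
      by (simp add: divide_simps) (simp add: algebra_simps)
    have xk: "x < R - k"
    proof -
      have "beta/sm*(R-x-k) > 0" using ZC ZCx by simp
      then show ?thesis using pos by (simp add: zero_less_mult_iff zero_less_divide_iff)
    qed
    have x0: "x > 0" unfolding x_def using S0 N0 pos by simp
    have rel: "x*(mu*sm*(R-x) + ss*beta*(R-x-k)) = mu*sm*(R-x)"
    proof -
      have "sm*S*Y + ss*S*(Z-CI) - N*Y = 0" using e2 unfolding pp0 .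
      then have "sm*(N*x/sm)*(mu*(R-x)/sm) + ss*(N*x/sm)*(beta/sm*(R-x-k)) - N*(mu*(R-x)/sm) = 0"
        unfolding Sx Yx ZCx .
      moreover have "sm*(N*x/sm)*(mu*(R-x)/sm) + ss*(N*x/sm)*(beta/sm*(R-x-k)) - N*(mu*(R-x)/sm)
         = N/sm^2 * (x*(mu*sm*(R-x) + ss*beta*(R-x-k)) - mu*sm*(R-x))"
        using pos by (simp add: field_simps power2_eq_square)
      ultimately have "N/sm^2 * (x*(mu*sm*(R-x) + ss*beta*(R-x-k)) - mu*sm*(R-x)) = 0" by simp
      then show ?thesis using N0 pos by simp
    qed
    define D where "D = mu*sm+beta*ss"
    have D0: "D > 0" unfolding D_def using pos by (simp add: add_pos_pos)
    have qD: "q*D = mu*sm" unfolding q_def qq_def D_def using D0 unfolding D_def by simp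
    have pD': "p = (mu + r) * sm * ss * CI / (mu * D)" unfolding p_def pp_def D_def by simp
    have pD: "p*D = k*beta*ss" unfolding pD' k_def using D0 pos
      by (simp add: divide_simps)
    have "D*(x^2 - (R-p+q)*x + R*q) = D*x^2 - (D*R - p*D + q*D)*x + R*(q*D)"
      by (simp add: algebra_simps power2_eq_square)
    also have "\<dots> = 0" unfolding pD qD unfolding D_def using rel by (simp add: algebra_simps power2_eq_square)
    finally have quad: "x^2 - (R-p+q)*x + R*q = 0" using D0 by simp
    have Yx2: "Y = mu*R/sm - mu*(N*x/sm)/N" unfolding Yx using N0 pos by (simp add: field_simps)
    have Zx2: "Z = beta*R/sm - beta*(N*x/sm)/N - r*CI/mu" unfolding Zx unfolding Yx
      using N0 pos by (simp add: field_simps)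
    have "E = (N*x/sm, mu*R/sm - mu*(N*x/sm)/N, beta*R/sm - beta*(N*x/sm)/N - r*CI/mu)"
      unfolding E using Sx Yx2 Zx2 by simp
    then show ?thesis using x0 xk quad by blast
  qed
qed

lemma endemic_of_root:
  fixes A sm ss mu rho beta r CI x :: real
  assumes pos: "A > 0" "sm > 0" "ss > 0" "mu > 0" "rho > 0" "beta > 0" "r > 0" "CI > 0"
  defines "R \<equiv> R0 A sm mu rho beta r"
    and "k \<equiv> sm * (mu + r) * CI / (mu * beta)"
    and "p \<equiv> pp A sm ss mu rho beta r CI"
    and "q \<equiv> qq A sm ss mu rho beta r CI"
    and "N \<equiv> mu + beta + rho"
  assumes x0: "0 < x" and xk: "x < R - k" and quad: "x^2 - (R-p+q)*x + R*q = 0"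
  shows "endemic_eq A sm ss mu rho beta r CI
     (N*x/sm, mu*R/sm - mu*(N*x/sm)/N, beta*R/sm - beta*(N*x/sm)/N - r*CI/mu)"
proof -
  have N0: "N > 0" unfolding N_def using pos by simp
  have NN: "mu+rho+beta = N" unfolding N_def by simp
  have RN: "R = A*sm/(mu*N)" unfolding R_def R0_def N_def by simp
  have mr: "mu + r > 0" using pos by simp
  have k0: "k > 0" unfolding k_def using pos by simp
  define S where "S = N*x/sm"
  define Y where "Y = mu*R/sm - mu*(N*x/sm)/N"
  define Z where "Z = beta*R/sm - beta*(N*x/sm)/N - r*CI/mu"
  have Yx: "Y = mu*(R-x)/sm" unfolding Y_def using N0 pos by (simp add: field_simps)
  have Zx: "Z = beta*(R-x)/sm - r*CI/mu" unfolding Z_def using N0 pos by (simp add: field_simps)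
  have ZCx: "Z - CI = beta/sm*(R-x-k)" unfolding Zx k_def using pos mr
    by (simp add: divide_simps) (simp add: algebra_simps)
  have ZC: "Z > CI"
  proof -
    have "beta/sm*(R-x-k) > 0" using xk pos by simp
    then show ?thesis using ZCx by simp
  qed
  have pp0: "pos_part (Z - CI) = Z - CI" unfolding pos_part_def using ZC by simp
  have T: "Tfun r CI Z = r*CI" unfolding Tfun_def using ZC by auto
  have S0: "S > 0" unfolding S_def using N0 pos x0 by simp
  have Y0: "Y > 0" unfolding Yx using pos xk k0 by simp
  have Z0: "Z > 0" using ZC pos by simp
  define D where "D = mu*sm+beta*ss"
  have D0: "D > 0" unfolding D_def using pos by (simp add: add_pos_pos)
  have qD: "q*D = mu*sm" unfolding q_def qq_def D_def using D0 unfolding D_def by simp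
  have pD': "p = (mu + r) * sm * ss * CI / (mu * D)" unfolding p_def pp_def D_def by simp
  have pD: "p*D = k*beta*ss" unfolding pD' k_def using D0 pos by (simp add: divide_simps)
  have "x*(mu*sm*(R-x) + ss*beta*(R-x-k)) - mu*sm*(R-x) = - (D*x^2 - (D*R - p*D + q*D)*x + R*(q*D))"
    unfolding pD qD unfolding D_def by (simp add: algebra_simps power2_eq_square)
  also have "D*x^2 - (D*R - p*D + q*D)*x + R*(q*D) = D*(x^2 - (R-p+q)*x + R*q)"
    by (simp add: algebra_simps power2_eq_square)
  finally have rel: "x*(mu*sm*(R-x) + ss*beta*(R-x-k)) - mu*sm*(R-x) = 0" using quad by simp
  have e2: "sm*S*Y + ss*S*(Z-CI) - N*Y = 0"
  proof -
    have "sm*S*Y + ss*S*(Z-CI) - N*Y = sm*(N*x/sm)*(mu*(R-x)/sm) + ss*(N*x/sm)*(beta/sm*(R-x-k)) - N*(mu*(R-x)/sm)"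
      unfolding S_def Yx ZCx ..
    also have "\<dots> = N/sm^2 * (x*(mu*sm*(R-x) + ss*beta*(R-x-k)) - mu*sm*(R-x))"
      using pos by (simp add: field_simps power2_eq_square)
    also have "\<dots> = 0" using rel by simp
    finally show ?thesis .
  qed
  have e12: "A - mu*S - N*Y = 0"
  proof -
    have "A/N = R*mu/sm" unfolding RN using N0 pos by (simp add: field_simps)
    then have "A = N*(R*mu/sm)" using N0 by (simp add: field_simps)
    then show ?thesis unfolding S_def Yx using N0 pos by (simp add: field_simps)
  qed
  have e1: "A - sm*S*Y - ss*S*(Z-CI) - mu*S = 0" using e12 e2 by simp
  have e3: "beta*Y - r*CI - mu*Z = 0" unfolding Yx Zx using pos by (simp add: field_simps)
  show ?thesis
    unfolding Z_def[symmetric] unfolding Y_def[symmetric] unfolding S_def[symmetric] endemic_unfold NN pp0 T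
    using S0 Y0 Z0 e1 e2 e3 by simp
qed



theorem theorem2p3:
  fixes A sm ss mu rho beta r CI :: real
  assumes pos: "A > 0" "sm > 0" "ss > 0" "mu > 0" "rho > 0" "beta > 0" "r > 0" "CI > 0"
    and hR: "R0 A sm mu rho beta r > sm * (mu + r) * CI / (mu * beta)"
    and hC: "CI \<le> mu^2 / (mu + r) * (sqrt (beta / (mu * sm) + 1 / ss) - sqrt (1 / ss))^2"
  defines "R \<equiv> R0 A sm mu rho beta r"
    and "K \<equiv> 1 + sm * (mu + r) / (mu * beta) * CI"
    and "p \<equiv> pp A sm ss mu rho beta r CI"
    and "q \<equiv> qq A sm ss mu rho beta r CI"
  shows
    "((sqrt p + sqrt q)^2 \<le> R \<and> R \<le> 1 \<longrightarrow>
        \<not> endemic_eq A sm ss mu rho beta r CI (Estar A sm ss mu rho beta r CI) \<and>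
        Ei_exists (-1) A sm ss mu rho beta r CI \<and> Ei_exists 1 A sm ss mu rho beta r CI)
     \<and> (1 < R \<and> R < K \<longrightarrow>
        endemic_eq A sm ss mu rho beta r CI (Estar A sm ss mu rho beta r CI) \<and>
        Ei_exists (-1) A sm ss mu rho beta r CI \<and> Ei_exists 1 A sm ss mu rho beta r CI)
     \<and> (R = K \<longrightarrow>
        endemic_eq A sm ss mu rho beta r CI (Estar A sm ss mu rho beta r CI) \<and>
        Ei_exists (-1) A sm ss mu rho beta r CI \<and> \<not> Ei_exists 1 A sm ss mu rho beta r CI)
     \<and> (R > K \<longrightarrow>
        Ei_exists (-1) A sm ss mu rho beta r CI \<and>
        endemic_eq A sm ss mu rho beta r CI (Ei (-1) A sm ss mu rho beta r CI) \<and>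
        (\<forall>E. endemic_eq A sm ss mu rho beta r CI E \<longrightarrow> E = Ei (-1) A sm ss mu rho beta r CI))"
  proof -
  note pos' = pos
  define k where "k = sm*(mu+r)*CI/(mu*beta)"
  define N where "N = mu + beta + rho"
  define D where "D = mu*sm+beta*ss"
  define d where "d = discr A sm ss mu rho beta r CI"
  have D0: "D > 0" unfolding D_def using pos by (simp add: add_pos_pos)
  have k0: "k > 0" unfolding k_def using pos by simp
  have KK: "K = 1 + k" unfolding K_def k_def by simp
  have Rk: "R > k" using hR unfolding R_def k_def by simp
  have dd: "d = (R-p-q)^2 - 4*p*q" unfolding d_def discr_def Let_def R_def p_def q_def by simp
  have qD: "q = mu*sm/D" unfolding q_def qq_def D_def by simp
  have q0: "0 < q" unfolding qD using pos D0 by simp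
  have q1: "q < 1" unfolding qD using pos D0 by (simp add: D_def)
  have oq: "1 - q = beta*ss/D" unfolding qD using D0 by (simp add: D_def field_simps)
  have pD': "p = (mu + r) * sm * ss * CI / (mu * D)" unfolding p_def pp_def D_def by simp
  have pk: "p = k*(1-q)" unfolding oq pD' k_def using D0 pos by (simp add: divide_simps)
  have hs: "sqrt p + sqrt q \<le> 1"
    using hs_lemma[of sm ss mu beta r CI] pos hC unfolding p_def pp_def q_def qq_def by simp
  have ex: "Ei_exists s A sm ss mu rho beta r CI \<longleftrightarrow>
      d \<ge> 0 \<and> 0 < (R-p+q+s*sqrt d)/2 \<and> (R-p+q+s*sqrt d)/2 < R-k" for s
    using Ei_exists_iff[of sm mu rho beta r CI s A ss] pos
    unfolding R_def k_def p_def q_def d_def by simp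
  have ex1: "Ei_exists (-1) A sm ss mu rho beta r CI \<longleftrightarrow>
      d \<ge> 0 \<and> 0 < (R-p+q-sqrt d)/2 \<and> (R-p+q-sqrt d)/2 < R-k" using ex[of "-1"] by simp
  have ex2: "Ei_exists 1 A sm ss mu rho beta r CI \<longleftrightarrow>
      d \<ge> 0 \<and> 0 < (R-p+q+sqrt d)/2 \<and> (R-p+q+sqrt d)/2 < R-k" using ex[of 1] by simp
  have es1: "R \<le> 1 \<Longrightarrow> \<not> endemic_eq A sm ss mu rho beta r CI (Estar A sm ss mu rho beta r CI)"
    using Estar_lemma(1)[of A sm ss mu rho beta r CI] pos unfolding R_def by blast
  have es2: "1 < R \<Longrightarrow> R \<le> K \<Longrightarrow> endemic_eq A sm ss mu rho beta r CI (Estar A sm ss mu rho beta r CI)"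
    using Estar_lemma(2)[of A sm ss mu rho beta r CI] pos unfolding R_def KK k_def by blast
  have both: "Ei_exists (-1) A sm ss mu rho beta r CI \<and> Ei_exists 1 A sm ss mu rho beta r CI"
    if h1: "(sqrt p + sqrt q)^2 \<le> R" and h2: "R < 1 + k"
  proof -
    have "d \<ge> 0 \<and> 0 < (R-p+q - sqrt d)/2 \<and> (R-p+q + sqrt d)/2 < R-k"
      using case_a[OF q0 q1 k0 pk hs h1 h2] unfolding dd .
    then have a1: "d \<ge> 0" and a2: "0 < (R-p+q - sqrt d)/2" and a3: "(R-p+q + sqrt d)/2 < R-k" by auto
    have a4: "sqrt d \<ge> 0" using a1 by simp
    have gen: "\<And>t::real. (R-p+q + t)/2 < R-k \<Longrightarrow> 0 < (R-p+q - t)/2 \<Longrightarrow> 0 \<le> t \<Longrightarrow>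
       (R-p+q - t)/2 < R-k \<and> 0 < (R-p+q + t)/2" by (intro conjI; simp add: field_simps)
    have a5: "(R-p+q - sqrt d)/2 < R-k" and a6: "0 < (R-p+q + sqrt d)/2"
      using gen[OF a3 a2 a4] by auto
    show ?thesis unfolding ex1 ex2 using a1 a2 a3 a5 a6 by blast
  qed
  have sq1: "(sqrt p + sqrt q)^2 \<le> 1"
  proof -
    have "p > 0" using pk k0 q1 by simp
    then have "0 \<le> sqrt p + sqrt q" using q0 by simp
    then show ?thesis using hs by (simp add: power_le_one)
  qed
  have C1: "(sqrt p + sqrt q)^2 \<le> R \<and> R \<le> 1 \<longrightarrow> \<not> endemic_eq A sm ss mu rho beta r CI (Estar A sm ss mu rho beta r CI) \<and>
        Ei_exists (-1) A sm ss mu rho beta r CI \<and> Ei_exists 1 A sm ss mu rho beta r CI"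
  proof
    assume "(sqrt p + sqrt q)^2 \<le> R \<and> R \<le> 1"
    then show "\<not> endemic_eq A sm ss mu rho beta r CI (Estar A sm ss mu rho beta r CI) \<and>
        Ei_exists (-1) A sm ss mu rho beta r CI \<and> Ei_exists 1 A sm ss mu rho beta r CI"
      using es1 both k0 by auto
  qed
  have C2: "1 < R \<and> R < K \<longrightarrow> endemic_eq A sm ss mu rho beta r CI (Estar A sm ss mu rho beta r CI) \<and>
        Ei_exists (-1) A sm ss mu rho beta r CI \<and> Ei_exists 1 A sm ss mu rho beta r CI"
  proof
    assume a: "1 < R \<and> R < K"
    then have "(sqrt p + sqrt q)^2 \<le> R" using sq1 by simp
    then show "endemic_eq A sm ss mu rho beta r CI (Estar A sm ss mu rho beta r CI) \<and>
        Ei_exists (-1) A sm ss mu rho beta r CI \<and> Ei_exists 1 A sm ss mu rho beta r CI"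
      using es2 both a KK by auto
  qed
  have C3: "R = K \<longrightarrow> endemic_eq A sm ss mu rho beta r CI (Estar A sm ss mu rho beta r CI) \<and>
        Ei_exists (-1) A sm ss mu rho beta r CI \<and> \<not> Ei_exists 1 A sm ss mu rho beta r CI"
  proof
    assume a: "R = K"
    have c: "d \<ge> 0 \<and> (R-p+q - sqrt d)/2 = (1+k)*q \<and> (R-p+q + sqrt d)/2 = 1"
      using case_b[OF q0 q1 k0 pk hs, of R] a KK unfolding dd by simp
    have kq: "k*q < 1-q" using kq_lt[OF q0 q1 k0 pk hs] .
    have "(1+k)*q > 0" using k0 q0 by simp
    moreover have "(1+k)*q < R - k" using kq a KK by (simp add: algebra_simps)
    ultimately show "endemic_eq A sm ss mu rho beta r CI (Estar A sm ss mu rho beta r CI) \<and>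
        Ei_exists (-1) A sm ss mu rho beta r CI \<and> \<not> Ei_exists 1 A sm ss mu rho beta r CI"
      using es2 a KK c k0 unfolding ex1 ex2 by auto
  qed
  have C4: "R > K \<longrightarrow> Ei_exists (-1) A sm ss mu rho beta r CI \<and>
        endemic_eq A sm ss mu rho beta r CI (Ei (-1) A sm ss mu rho beta r CI) \<and>
        (\<forall>E. endemic_eq A sm ss mu rho beta r CI E \<longrightarrow> E = Ei (-1) A sm ss mu rho beta r CI)"
  proof
    assume a: "R > K"
    have c: "d \<ge> 0 \<and> 0 < (R-p+q - sqrt d)/2 \<and> (R-p+q - sqrt d)/2 < R-k \<and>
      (\<forall>x. x^2 - (R-p+q)*x + R*q = 0 \<longrightarrow> x < R-k \<longrightarrow> x = (R-p+q - sqrt d)/2)"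
      using case_c[OF q0 q1 k0 pk, of R] a KK unfolding dd by simp
    define x1 where "x1 = (R-p+q - sqrt d)/2"
    have Ei1: "Ei (-1) A sm ss mu rho beta r CI =
        (N*x1/sm, mu*R/sm - mu*(N*x1/sm)/N, beta*R/sm - beta*(N*x1/sm)/N - r*CI/mu)"
    proof -
      have "Si (-1) A sm ss mu rho beta r CI = N*x1/sm"
        unfolding Si_def Let_def x1_def N_def d_def R_def p_def q_def by (simp add: field_simps)
      then show ?thesis unfolding Ei_def Let_def R_def N_def by simp
    qed
    have quad1: "x1^2 - (R-p+q)*x1 + R*q = 0"
    proof -
      have "x1^2 - (R-p+q)*x1 + R*q = ((sqrt d)^2 - ((R-p+q)^2 - 4*R*q))/4"
        unfolding x1_def by (simp add: power2_eq_square field_simps)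
      also have "\<dots> = 0" using c unfolding dd disc_eq by simp
      finally show ?thesis .
    qed
    have x1a: "0 < x1" and x1b: "x1 < R - k" using c unfolding x1_def by auto
    have "endemic_eq A sm ss mu rho beta r CI (Ei (-1) A sm ss mu rho beta r CI)"
      unfolding Ei1 by (rule endemic_of_root[of A sm ss mu rho beta r CI x1,
        folded R_def k_def p_def q_def N_def, OF pos x1a x1b quad1])
    moreover have "E = Ei (-1) A sm ss mu rho beta r CI" if hE: "endemic_eq A sm ss mu rho beta r CI E" for E
    proof -
      have "R > 1 + k" using a KK by simp
      then obtain x where x: "0 < x" "x < R - k" "x^2 - (R-p+q)*x + R*q = 0"
        "E = (N*x/sm, mu*R/sm - mu*(N*x/sm)/N, beta*R/sm - beta*(N*x/sm)/N - r*CI/mu)"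
        using unique_lemma[of A sm ss mu rho beta r CI E,
          folded R_def k_def p_def q_def N_def, OF pos _ hE] \<open>R > 1 + k\<close> by blast
      then have "x = x1" using c unfolding x1_def by blast
      then show ?thesis using x(4) Ei1 by simp
    qed
    ultimately show "Ei_exists (-1) A sm ss mu rho beta r CI \<and>
        endemic_eq A sm ss mu rho beta r CI (Ei (-1) A sm ss mu rho beta r CI) \<and>
        (\<forall>E. endemic_eq A sm ss mu rho beta r CI E \<longrightarrow> E = Ei (-1) A sm ss mu rho beta r CI)"
      using c unfolding ex1 by blast
  qed
  show ?thesis using C1 C2 C3 C4 by blast
qed


end
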